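(* Let $kQ/I$ be a string algebra such that $Q$ has neither loops nor oriented cycles. Then there is a coloring $c$ of $Q$ such that $kQ/I_c$ is a gentle string algebra and $I_c\subseteq I$, so that the identity of $kQ$ induces an algebra epimorphism $kQ/I_c\to kQ/I$.
   Context: Paths are composed right to left ($ba$ means $a$ then $b$ when $ha=tb$). A string algebra is a finite-dimensional algebra $kQ/I$ with $I$ generated by paths, such that (a) each vertex is the head of at most 2 arrows and the tail of at most 2 arrows, and (b) for each arrow $b$ there is at most one arrow $a$ with $ta=hb$ and $ab\notin I$, and at most one arrow $c'$ with $hc'=tb$ and $bc'\notin I$. It is a gentle string algebra if moreover (c) for each arrow $b$ there is at most one arrow $a$ with $ta=hb$ and $ab\in I$ and at most one arrow $c'$ with $hc'=tb$ and $bc'\in I$, and (d) $I$ is generated by paths of length 2. A coloring of $Q$ is a map $c:Q_1\to S$ to a finite set such that each $c^{-1}(s)$ is the set of arrows of a single directed path; $I_c$ is the ideal generated by all $ba$ with $ha=tb$, $c(a)=c(b)$. *)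

theory Defs
  imports Main "HOL-Library.Sublist"
begin

text \<open>A (nonempty) path is a list of arrows in traversal order: the list [a, b] is
  the path "ba" (a then b), which requires h a = t b.\<close>

definition quiver :: "'v set \<Rightarrow> 'a set \<Rightarrow> ('a \<Rightarrow> 'v) \<Rightarrow> ('a \<Rightarrow> 'v) \<Rightarrow> bool" where
  "quiver Q0 Q1 h t \<longleftrightarrow> finite Q0 \<and> finite Q1 \<and> (\<forall>a\<in>Q1. h a \<in> Q0 \<and> t a \<in> Q0)"

definition valid_path :: "'a set \<Rightarrow> ('a \<Rightarrow> 'v) \<Rightarrow> ('a \<Rightarrow> 'v) \<Rightarrow> 'a list \<Rightarrow> bool" where
  "valid_path Q1 h t p \<longleftrightarrow> p \<noteq> [] \<and> set p \<subseteq> Q1 \<and>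
     (\<forall>i. Suc i < length p \<longrightarrow> h (p ! i) = t (p ! Suc i))"

definition no_oriented_cycles :: "'a set \<Rightarrow> ('a \<Rightarrow> 'v) \<Rightarrow> ('a \<Rightarrow> 'v) \<Rightarrow> bool" where
  "no_oriented_cycles Q1 h t \<longleftrightarrow> (\<forall>p. valid_path Q1 h t p \<longrightarrow> t (hd p) \<noteq> h (last p))"

text \<open>The ideal of kQ generated by a set R of paths is spanned by the paths that
  contain some element of R as a (contiguous) subpath; a path lies in it iff this holds.\<close>
definition in_ideal :: "'a list set \<Rightarrow> 'a list \<Rightarrow> bool" where
  "in_ideal R p \<longleftrightarrow> (\<exists>r\<in>R. sublist r p)"

definition paths_of :: "'a set \<Rightarrow> ('a \<Rightarrow> 'v) \<Rightarrow> ('a \<Rightarrow> 'v) \<Rightarrow> 'a list set \<Rightarrow> bool" where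
  "paths_of Q1 h t R \<longleftrightarrow> (\<forall>r\<in>R. valid_path Q1 h t r)"

text \<open>Finite-dimensionality of kQ/I: finitely many nonempty paths are not in I
  (trivial paths are finitely many since Q0 is finite).\<close>
definition fin_dim :: "'a set \<Rightarrow> ('a \<Rightarrow> 'v) \<Rightarrow> ('a \<Rightarrow> 'v) \<Rightarrow> 'a list set \<Rightarrow> bool" where
  "fin_dim Q1 h t R \<longleftrightarrow> finite {p. valid_path Q1 h t p \<and> \<not> in_ideal R p}"

definition string_algebra ::
  "'v set \<Rightarrow> 'a set \<Rightarrow> ('a \<Rightarrow> 'v) \<Rightarrow> ('a \<Rightarrow> 'v) \<Rightarrow> 'a list set \<Rightarrow> bool" where
  "string_algebra Q0 Q1 h t R \<longleftrightarrow>
     quiver Q0 Q1 h t \<and> paths_of Q1 h t R \<and> fin_dim Q1 h t R \<and>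
     (\<forall>v\<in>Q0. card {a\<in>Q1. h a = v} \<le> 2 \<and> card {a\<in>Q1. t a = v} \<le> 2) \<and>
     (\<forall>b\<in>Q1.
        (\<forall>a1\<in>Q1. \<forall>a2\<in>Q1. t a1 = h b \<and> \<not> in_ideal R [b, a1] \<and>
                             t a2 = h b \<and> \<not> in_ideal R [b, a2] \<longrightarrow> a1 = a2) \<and>
        (\<forall>c1\<in>Q1. \<forall>c2\<in>Q1. h c1 = t b \<and> \<not> in_ideal R [c1, b] \<and>
                             h c2 = t b \<and> \<not> in_ideal R [c2, b] \<longrightarrow> c1 = c2))"

definition gentle_string_algebra ::
  "'v set \<Rightarrow> 'a set \<Rightarrow> ('a \<Rightarrow> 'v) \<Rightarrow> ('a \<Rightarrow> 'v) \<Rightarrow> 'a list set \<Rightarrow> bool" where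
  "gentle_string_algebra Q0 Q1 h t R \<longleftrightarrow>
     string_algebra Q0 Q1 h t R \<and>
     (\<forall>b\<in>Q1.
        (\<forall>a1\<in>Q1. \<forall>a2\<in>Q1. t a1 = h b \<and> in_ideal R [b, a1] \<and>
                             t a2 = h b \<and> in_ideal R [b, a2] \<longrightarrow> a1 = a2) \<and>
        (\<forall>c1\<in>Q1. \<forall>c2\<in>Q1. h c1 = t b \<and> in_ideal R [c1, b] \<and>
                             h c2 = t b \<and> in_ideal R [c2, b] \<longrightarrow> c1 = c2)) \<and>
     (\<exists>R'. (\<forall>r\<in>R'. valid_path Q1 h t r \<and> length r = 2) \<and>
           (\<forall>p. valid_path Q1 h t p \<longrightarrow> (in_ideal R p \<longleftrightarrow> in_ideal R' p)))"

definition coloring :: "'a set \<Rightarrow> ('a \<Rightarrow> 'v) \<Rightarrow> ('a \<Rightarrow> 'v) \<Rightarrow> ('a \<Rightarrow> 's) \<Rightarrow> bool" where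
  "coloring Q1 h t c \<longleftrightarrow>
     (\<forall>s\<in>c ` Q1. \<exists>p. valid_path Q1 h t p \<and> set p = {a\<in>Q1. c a = s})"

definition color_rels :: "'a set \<Rightarrow> ('a \<Rightarrow> 'v) \<Rightarrow> ('a \<Rightarrow> 'v) \<Rightarrow> ('a \<Rightarrow> 's) \<Rightarrow> 'a list set" where
  "color_rels Q1 h t c = {[a, b] | a b. a \<in> Q1 \<and> b \<in> Q1 \<and> h a = t b \<and> c a = c b}"

end

theory Submission
  imports Defs
begin

lemma vp_cons: "p \<noteq> [] \<Longrightarrow> valid_path Q1 h t (x#p) \<longleftrightarrow> x \<in> Q1 \<and> h x = t (hd p) \<and> valid_path Q1 h t p"
  unfolding valid_path_def
  apply (cases p)
   apply simp
  apply (auto simp: nth_Cons split: nat.splits)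
  done

lemma vp_single: "valid_path Q1 h t [x] \<longleftrightarrow> x \<in> Q1"
  by (simp add: valid_path_def)

lemma vp_append: "xs \<noteq> [] \<Longrightarrow> ys \<noteq> [] \<Longrightarrow>
   valid_path Q1 h t (xs @ ys) \<longleftrightarrow> valid_path Q1 h t xs \<and> valid_path Q1 h t ys \<and> h (last xs) = t (hd ys)"
proof (induction xs)
  case Nil then show ?case by simp
next
  case (Cons x xs)
  show ?case
  proof (cases "xs = []")
    case True then show ?thesis using Cons.prems by (auto simp: vp_cons vp_single)
  next
    case False then show ?thesis using Cons by (auto simp: vp_cons)
  qed
qed

lemma vp_distinct:
  assumes NC: "no_oriented_cycles Q1 h t"
  shows "valid_path Q1 h t p \<Longrightarrow> distinct p"
proof (induction p)
  case Nil then show ?case by simp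
next
  case (Cons x p)
  show ?case
  proof (cases "p = []")
    case True then show ?thesis by simp
  next
    case False
    have vp: "valid_path Q1 h t p" using Cons.prems False by (simp add: vp_cons)
    have "x \<notin> set p"
    proof
      assume "x \<in> set p"
      then obtain us vs where p: "p = us @ x # vs" by (meson split_list)
      have v: "valid_path Q1 h t ((x # us) @ (x # vs))" using Cons.prems p by simp
      then have "valid_path Q1 h t (x # us)" and "h (last (x # us)) = t x"
        using vp_append[of "x#us" "x#vs" Q1 h t] by auto
      then show False using NC unfolding no_oriented_cycles_def by force
    qed
    then show ?thesis using Cons.IH vp by simp
  qed
qed

lemma vp_finite:
  assumes NC: "no_oriented_cycles Q1 h t" and fin: "finite Q1"
  shows "finite {p. valid_path Q1 h t p}"
proof (rule finite_subset[OF _ finite_lists_length_le[OF fin, of "card Q1"]])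
  show "{p. valid_path Q1 h t p} \<subseteq> {xs. set xs \<subseteq> Q1 \<and> length xs \<le> card Q1}"
  proof
    fix p assume "p \<in> {p. valid_path Q1 h t p}"
    then have v: "valid_path Q1 h t p" by simp
    then have d: "distinct p" using vp_distinct[OF NC] by blast
    have s: "set p \<subseteq> Q1" using v by (simp add: valid_path_def)
    have "length p = card (set p)" using d by (simp add: distinct_card)
    also have "\<dots> \<le> card Q1" using s fin by (simp add: card_mono)
    finally show "p \<in> {xs. set xs \<subseteq> Q1 \<and> length xs \<le> card Q1}" using s by simp
  qed
qed

lemma rtranclpE [cases set, case_names base step]:
  assumes "r\<^sup>*\<^sup>* a b" obtains (base) "a = b" | (step) y where "r\<^sup>*\<^sup>* a y" "r y b"
  using assms by (cases rule: rtranclp.cases) auto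

lemma rt_linear:
  assumes fn: "\<And>x y z. S x y \<Longrightarrow> S x z \<Longrightarrow> y = z"
  shows "S\<^sup>*\<^sup>* a0 a \<Longrightarrow> S\<^sup>*\<^sup>* a0 b \<Longrightarrow> S\<^sup>*\<^sup>* a b \<or> S\<^sup>*\<^sup>* b a"
proof (induction rule: rtranclp_induct)
  case base then show ?case by simp
next
  case (step y z)
  from step.IH step.prems consider "S\<^sup>*\<^sup>* y b" | "S\<^sup>*\<^sup>* b y" by blast
  then show ?case
  proof cases
    case 1
    then show ?thesis
    proof (cases rule: converse_rtranclpE)
      case base then show ?thesis using step.hyps(2) by auto
    next
      case (step w)
      then have "w = z" using fn \<open>S y z\<close> by blast
      then show ?thesis using step by simp
    qed
  next
    case 2 then show ?thesis using step.hyps(2) by (meson rtranclp.rtrancl_into_rtrancl)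
  qed
qed

lemma sublist2: "sublist r [a, b] \<Longrightarrow> length r = 2 \<Longrightarrow> r = [a, b]"
  unfolding sublist_def
  by (auto simp: append_eq_Cons_conv Cons_eq_append_conv)

lemma three: "finite A \<Longrightarrow> card A \<le> 2 \<Longrightarrow> x \<in> A \<Longrightarrow> y \<in> A \<Longrightarrow> z \<in> A \<Longrightarrow> x \<noteq> y \<Longrightarrow> z = x \<or> z = y"
proof (rule ccontr)
  assume a: "finite A" "card A \<le> 2" "x \<in> A" "y \<in> A" "z \<in> A" "x \<noteq> y" "\<not> (z = x \<or> z = y)"
  then have "card {x, y, z} \<le> card A" by (intro card_mono) auto
  moreover have "card {x, y, z} = 3" using a by (auto simp: card_insert_if)
  ultimately show False using a by simp
qed

lemma acyc_wf: "finite r \<Longrightarrow> (\<And>x. \<not> S\<^sup>+\<^sup>+ x x) \<Longrightarrow> r = {(x,y). S x y} \<Longrightarrow> wf r"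
  apply (rule finite_acyclic_wf, assumption)
  unfolding acyclic_def
proof (intro allI notI)
  fix x assume r: "r = {(x,y). S x y}" and n: "\<And>x. \<not> S\<^sup>+\<^sup>+ x x" and xx: "(x, x) \<in> r\<^sup>+"
  have "(\<lambda>a b. (a,b) \<in> r)\<^sup>+\<^sup>+ x x" unfolding tranclp_trancl_eq using xx by simp
  moreover have "(\<lambda>a b. (a,b) \<in> r) = S" using r by (simp add: fun_eq_iff)
  ultimately show False using n by simp
qed


definition start :: "('a \<Rightarrow> 'a \<Rightarrow> bool) \<Rightarrow> 'a \<Rightarrow> 'a" where
  "start S a = (THE a0. S\<^sup>*\<^sup>* a0 a \<and> (\<forall>x. \<not> S x a0))"

context
  fixes Q0 :: "'v set" and Q1 :: "'a set" and h t :: "'a \<Rightarrow> 'v" and R :: "'a list set"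
    and S :: "'a \<Rightarrow> 'a \<Rightarrow> bool"
  assumes SA: "string_algebra Q0 Q1 h t R" and NC: "no_oriented_cycles Q1 h t"
    and S1: "\<And>a b. S a b \<Longrightarrow> a \<in> Q1 \<and> b \<in> Q1 \<and> h a = t b \<and> in_ideal R [a,b]"
    and S2: "\<And>a b b'. S a b \<Longrightarrow> S a b' \<Longrightarrow> b = b'"
    and S3: "\<And>a a' b. S a b \<Longrightarrow> S a' b \<Longrightarrow> a = a'"
    and S4: "\<And>a b1 b2. a\<in>Q1 \<Longrightarrow> b1\<in>Q1 \<Longrightarrow> b2\<in>Q1 \<Longrightarrow> b1\<noteq>b2 \<Longrightarrow> t b1 = h a \<Longrightarrow> t b2 = h a \<Longrightarrow> \<exists>b. S a b"
    and S5: "\<And>b a1 a2. b\<in>Q1 \<Longrightarrow> a1\<in>Q1 \<Longrightarrow> a2\<in>Q1 \<Longrightarrow> a1\<noteq>a2 \<Longrightarrow> h a1 = t b \<Longrightarrow> h a2 = t b \<Longrightarrow> \<exists>a. S a b"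
begin

lemma finQ1: "finite Q1" using SA by (simp add: string_algebra_def quiver_def)

lemma L_path: "S\<^sup>*\<^sup>* x y \<Longrightarrow> x \<in> Q1 \<Longrightarrow> \<exists>p. valid_path Q1 h t p \<and> hd p = x \<and> last p = y"
proof (induction rule: converse_rtranclp_induct)
  case base then show ?case by (intro exI[of _ "[y]"]) (simp add: vp_single)
next
  case (step x z)
  then obtain p where p: "valid_path Q1 h t p" "hd p = z" "last p = y" using S1 by blast
  have ne: "p \<noteq> []" using p(1) by (simp add: valid_path_def)
  show ?case using p ne S1[OF step(1)] step.prems by (intro exI[of _ "x # p"]) (simp add: vp_cons)
qed

lemma NCS: "S\<^sup>*\<^sup>* x y \<Longrightarrow> x \<in> Q1 \<Longrightarrow> t x \<noteq> h y"
proof -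
  assume "S\<^sup>*\<^sup>* x y" "x \<in> Q1"
  then obtain p where "valid_path Q1 h t p" "hd p = x" "last p = y" using L_path by blast
  then show ?thesis using NC unfolding no_oriented_cycles_def by blast
qed

lemma inQ1: "S\<^sup>*\<^sup>* x y \<Longrightarrow> y \<in> Q1 \<Longrightarrow> x \<in> Q1"
  by (erule converse_rtranclpE) (auto dest: S1)

lemma inQ1': "S\<^sup>*\<^sup>* x y \<Longrightarrow> x \<in> Q1 \<Longrightarrow> y \<in> Q1"
  by (erule rtranclpE) (auto dest: S1)

lemma acyc: "\<not> S\<^sup>+\<^sup>+ x x"
proof
  assume "S\<^sup>+\<^sup>+ x x"
  then obtain y where "S x y" "S\<^sup>*\<^sup>* y x" by (meson tranclpD)
  then show False using NCS[of y x] S1[of x y] by auto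
qed

lemma finS: "finite {(x,y). S x y}"
  by (rule finite_subset[of _ "Q1 \<times> Q1"]) (auto dest: S1 simp: finQ1)

lemma wfS: "wf {(x,y). S x y}"
  using acyc_wf[OF finS, of S] acyc by blast

lemma wfS': "wf ({(x,y). S x y}\<inverse>)"
proof -
  have "{(x,y). S x y}\<inverse> = {(x,y). S\<inverse>\<inverse> x y}" by auto
  moreover have "finite {(x,y). S\<inverse>\<inverse> x y}" using finS
    unfolding calculation[symmetric] by simp
  moreover have "\<not> (S\<inverse>\<inverse>)\<^sup>+\<^sup>+ x x" for x using acyc by (simp add: tranclp_converse)
  ultimately show ?thesis using acyc_wf[of "{(x,y). S\<inverse>\<inverse> x y}" "S\<inverse>\<inverse>"] by simp
qed

lemma start_ex: "\<exists>a0. S\<^sup>*\<^sup>* a0 a \<and> (\<forall>x. \<not> S x a0)"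
proof -
  have "a \<in> {x. S\<^sup>*\<^sup>* x a}" by simp
  then obtain z where z: "z \<in> {x. S\<^sup>*\<^sup>* x a}" "\<forall>y. (y, z) \<in> {(x,y). S x y} \<longrightarrow> y \<notin> {x. S\<^sup>*\<^sup>* x a}"
    using wfS[unfolded wf_eq_minimal] by blast
  have "\<forall>x. \<not> S x z"
  proof (intro allI notI)
    fix x assume "S x z"
    then have "S\<^sup>*\<^sup>* x a" using z(1) by (simp add: converse_rtranclp_into_rtranclp)
    then show False using z(2) \<open>S x z\<close> by auto
  qed
  then show ?thesis using z(1) by auto
qed

lemma start_uniq: "S\<^sup>*\<^sup>* a0 a \<Longrightarrow> \<forall>x. \<not> S x a0 \<Longrightarrow> S\<^sup>*\<^sup>* a1 a \<Longrightarrow> \<forall>x. \<not> S x a1 \<Longrightarrow> a0 = a1"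
proof -
  assume a: "S\<^sup>*\<^sup>* a0 a" "\<forall>x. \<not> S x a0" "S\<^sup>*\<^sup>* a1 a" "\<forall>x. \<not> S x a1"
  have fn: "\<And>x y z. S\<inverse>\<inverse> x y \<Longrightarrow> S\<inverse>\<inverse> x z \<Longrightarrow> y = z" using S3 by auto
  have rr: "(S\<inverse>\<inverse>)\<^sup>*\<^sup>* a a0" "(S\<inverse>\<inverse>)\<^sup>*\<^sup>* a a1" using a by (auto simp: rtranclp_conversep)
  have "(S\<inverse>\<inverse>)\<^sup>*\<^sup>* a0 a1 \<or> (S\<inverse>\<inverse>)\<^sup>*\<^sup>* a1 a0" by (rule rt_linear[of "S\<inverse>\<inverse>"]) (use fn rr in blast)+
  then have "S\<^sup>*\<^sup>* a1 a0 \<or> S\<^sup>*\<^sup>* a0 a1" by (auto simp: rtranclp_conversep)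
  then show "a0 = a1"
  proof
    assume "S\<^sup>*\<^sup>* a1 a0" then show ?thesis using a(2) by (cases rule: rtranclpE) auto
  next
    assume "S\<^sup>*\<^sup>* a0 a1" then show ?thesis using a(4) by (cases rule: rtranclpE) auto
  qed
qed

lemma start_prop: "S\<^sup>*\<^sup>* (start S a) a \<and> (\<forall>x. \<not> S x (start S a))"
proof -
  obtain a0 where a0: "S\<^sup>*\<^sup>* a0 a \<and> (\<forall>x. \<not> S x a0)" using start_ex by blast
  show ?thesis unfolding start_def
  proof (rule theI[of _ a0])
    show "S\<^sup>*\<^sup>* a0 a \<and> (\<forall>x. \<not> S x a0)" by (rule a0)
    fix x assume "S\<^sup>*\<^sup>* x a \<and> (\<forall>y. \<not> S y x)"
    then show "x = a0" using start_uniq[of x a a0] a0 by simp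
  qed
qed

lemma start_eq: "S\<^sup>*\<^sup>* a0 a \<Longrightarrow> \<forall>x. \<not> S x a0 \<Longrightarrow> start S a = a0"
proof -
  assume "S\<^sup>*\<^sup>* a0 a" "\<forall>x. \<not> S x a0"
  then show ?thesis using start_prop[of a] start_uniq[of "start S a" a a0] by simp
qed

lemma start_Q1: "a \<in> Q1 \<Longrightarrow> start S a \<in> Q1"
  using start_prop inQ1 by blast

lemma start_step: "S a b \<Longrightarrow> start S b = start S a"
  using start_prop[of a] by (intro start_eq) (auto intro: rtranclp.rtrancl_into_rtrancl)

lemma key: "a \<in> Q1 \<Longrightarrow> b \<in> Q1 \<Longrightarrow> h a = t b \<Longrightarrow> start S a = start S b \<Longrightarrow> S a b"
proof -
  assume a: "a \<in> Q1" "b \<in> Q1" "h a = t b" "start S a = start S b"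
  have rr: "S\<^sup>*\<^sup>* (start S a) a" "S\<^sup>*\<^sup>* (start S a) b" using start_prop a(4) by metis+
  have "S\<^sup>*\<^sup>* a b \<or> S\<^sup>*\<^sup>* b a" by (rule rt_linear[of S]) (use S2 rr in blast)+
  then consider "S\<^sup>*\<^sup>* a b" | "S\<^sup>*\<^sup>* b a" by blast
  then show "S a b"
  proof cases
    case 2 then show ?thesis using NCS[of b a] a by auto
  next
    case 1
    then show ?thesis
    proof (cases rule: converse_rtranclpE)
      case base then show ?thesis using NCS[of a a] a by auto
    next
      case (step x)
      from step(2) show ?thesis
      proof (cases rule: rtranclpE)
        case base then show ?thesis using step by simp
      next
        case (step y)
        have "x \<in> Q1" using S1 \<open>S a x\<close> by blast
        then have "t x \<noteq> h y" using NCS step(1) by blast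
        then show ?thesis using S1[OF \<open>S a x\<close>] S1[OF step(2)] a(3) by simp
      qed
    qed
  qed
qed

lemma chain: "x \<in> Q1 \<Longrightarrow> \<exists>p. valid_path Q1 h t p \<and> hd p = x \<and> set p = {b. S\<^sup>*\<^sup>* x b}"
proof (induction x rule: wf_induct_rule[OF wfS'])
  case (1 x)
  show ?case
  proof (cases "\<exists>y. S x y")
    case True
    then obtain y where y: "S x y" by blast
    then obtain q where q: "valid_path Q1 h t q" "hd q = y" "set q = {b. S\<^sup>*\<^sup>* y b}"
      using 1 S1 by blast
    have ne: "q \<noteq> []" using q(1) by (simp add: valid_path_def)
    have "set (x # q) = {b. S\<^sup>*\<^sup>* x b}"
    proof
      show "set (x # q) \<subseteq> {b. S\<^sup>*\<^sup>* x b}" using q(3) y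
        by (auto intro: converse_rtranclp_into_rtranclp)
      show "{b. S\<^sup>*\<^sup>* x b} \<subseteq> set (x # q)"
      proof
        fix b assume "b \<in> {b. S\<^sup>*\<^sup>* x b}"
        then have "S\<^sup>*\<^sup>* x b" by simp
        then show "b \<in> set (x # q)"
        proof (cases rule: converse_rtranclpE)
          case base then show ?thesis by simp
        next
          case (step y')
          then have "y' = y" using S2 y by blast
          then show ?thesis using step q(3) by simp
        qed
      qed
    qed
    then show ?thesis using q ne y S1[OF y] 1(2)
      by (intro exI[of _ "x # q"]) (simp add: vp_cons)
  next
    case False
    have "{b. S\<^sup>*\<^sup>* x b} = {x}"
    proof (safe)
      fix b assume "S\<^sup>*\<^sup>* x b"
      then show "b = x" using False by (cases rule: converse_rtranclpE) auto
    qed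
    then show ?thesis using 1(2) by (intro exI[of _ "[x]"]) (simp add: vp_single)
  qed
qed


lemma result: "\<exists>c :: 'a \<Rightarrow> nat.
           coloring Q1 h t c \<and>
           gentle_string_algebra Q0 Q1 h t (color_rels Q1 h t c) \<and>
           (\<forall>p. valid_path Q1 h t p \<longrightarrow> in_ideal (color_rels Q1 h t c) p \<longrightarrow> in_ideal R p)"
proof -
  have qv: "quiver Q0 Q1 h t" using SA by (simp add: string_algebra_def)
  have deg: "\<forall>v\<in>Q0. card {a\<in>Q1. h a = v} \<le> 2 \<and> card {a\<in>Q1. t a = v} \<le> 2"
    using SA by (simp add: string_algebra_def)
  have hQ: "a \<in> Q1 \<Longrightarrow> h a \<in> Q0 \<and> t a \<in> Q0" for a using qv by (simp add: quiver_def)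
  obtain f :: "'a \<Rightarrow> nat" where f: "inj_on f Q1" using finite_imp_inj_to_nat_seg[OF finQ1] by blast
  define c where "c = (\<lambda>a. f (start S a))"
  define C where "C = color_rels Q1 h t c"
  have ceq: "c a = c b \<longleftrightarrow> start S a = start S b" if "a \<in> Q1" "b \<in> Q1" for a b
    unfolding c_def using inj_on_eq_iff[OF f start_Q1[OF that(1)] start_Q1[OF that(2)]] .
  have SC: "in_ideal C [a,b] \<longleftrightarrow> S a b" for a b
  proof
    assume "in_ideal C [a,b]"
    then obtain r where r: "r \<in> C" "sublist r [a,b]" unfolding in_ideal_def by blast
    from r(1) obtain x y where xy: "r = [x,y]" "x \<in> Q1" "y \<in> Q1" "h x = t y" "c x = c y"
      unfolding C_def color_rels_def by blast
    have "length r = 2" using xy(1) by simp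
    then have "r = [a,b]" using sublist2[of r a b] r(2) by blast
    then have "x = a" "y = b" using xy(1) by auto
    moreover have "S x y" using key[OF xy(2) xy(3) xy(4)] ceq[OF xy(2) xy(3)] xy(5) by blast
    ultimately show "S a b" by simp
  next
    assume "S a b"
    have "c a = c b" using start_step[OF \<open>S a b\<close>] unfolding c_def by simp
    then have "[a,b] \<in> C" unfolding C_def color_rels_def using S1[OF \<open>S a b\<close>] by blast
    then show "in_ideal C [a,b]" unfolding in_ideal_def by blast
  qed
  have col: "coloring Q1 h t c"
    unfolding coloring_def
  proof
    fix s assume "s \<in> c ` Q1"
    then obtain a where a: "a \<in> Q1" "s = c a" by blast
    obtain p where p: "valid_path Q1 h t p" "set p = {b. S\<^sup>*\<^sup>* (start S a) b}"
      using chain[OF start_Q1[OF a(1)]] by blast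
    have "{b. S\<^sup>*\<^sup>* (start S a) b} = {b\<in>Q1. c b = s}"
    proof (intro equalityI subsetI)
      fix b assume "b \<in> {b. S\<^sup>*\<^sup>* (start S a) b}"
      then have b: "S\<^sup>*\<^sup>* (start S a) b" by simp
      have "b \<in> Q1" using inQ1'[OF b start_Q1[OF a(1)]] .
      moreover have "start S b = start S a" using start_eq[OF b] start_prop by blast
      ultimately show "b \<in> {b\<in>Q1. c b = s}" using a unfolding c_def by simp
    next
      fix b assume "b \<in> {b\<in>Q1. c b = s}"
      then have b: "b \<in> Q1" "c b = s" by auto
      then have "start S b = start S a" using ceq a by simp
      then show "b \<in> {b. S\<^sup>*\<^sup>* (start S a) b}" using start_prop[of b] by simp
    qed
    then show "\<exists>p. valid_path Q1 h t p \<and> set p = {b\<in>Q1. c b = s}" using p by metis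
  qed
  have pathsC: "paths_of Q1 h t C"
    unfolding paths_of_def C_def color_rels_def by (auto simp: vp_cons vp_single)
  have finC: "fin_dim Q1 h t C"
    unfolding fin_dim_def by (rule finite_subset[OF _ vp_finite[OF NC finQ1]]) auto
  have succ: "a1 = a2"  if A: "b \<in> Q1" "a1 \<in> Q1" "a2 \<in> Q1" "t a1 = h b" "\<not> S b a1" "t a2 = h b" "\<not> S b a2" for b a1 a2
  proof (rule ccontr)
    assume ne: "a1 \<noteq> a2"
    then obtain x where x: "S b x" using S4 A by metis
    have xx: "x \<in> Q1" "t x = h b" using S1[OF x] by auto
    have "card {a\<in>Q1. t a = h b} \<le> 2" using deg hQ[OF A(1)] by blast
    then have "x = a1 \<or> x = a2" using three[OF finite_subset[OF _ finQ1], of "{a\<in>Q1. t a = h b}" a1 a2 x] A xx ne by auto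
    then show False using x A by auto
  qed
  have pred: "a1 = a2"  if A: "b \<in> Q1" "a1 \<in> Q1" "a2 \<in> Q1" "h a1 = t b" "\<not> S a1 b" "h a2 = t b" "\<not> S a2 b" for b a1 a2
  proof (rule ccontr)
    assume ne: "a1 \<noteq> a2"
    then obtain x where x: "S x b" using S5 A by metis
    have xx: "x \<in> Q1" "h x = t b" using S1[OF x] by auto
    have "card {a\<in>Q1. h a = t b} \<le> 2" using deg hQ[OF A(1)] by blast
    then have "x = a1 \<or> x = a2" using three[OF finite_subset[OF _ finQ1], of "{a\<in>Q1. h a = t b}" a1 a2 x] A xx ne by auto
    then show False using x A by auto
  qed
  have "\<forall>b\<in>Q1. (\<forall>a1\<in>Q1. \<forall>a2\<in>Q1. t a1 = h b \<and> \<not> in_ideal C [b, a1] \<and> t a2 = h b \<and> \<not> in_ideal C [b, a2] \<longrightarrow> a1 = a2) \<and>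
        (\<forall>c1\<in>Q1. \<forall>c2\<in>Q1. h c1 = t b \<and> \<not> in_ideal C [c1, b] \<and> h c2 = t b \<and> \<not> in_ideal C [c2, b] \<longrightarrow> c1 = c2)"
    unfolding SC using succ pred by blast
  then have strC: "string_algebra Q0 Q1 h t C"
    unfolding string_algebra_def by (intro conjI qv pathsC finC deg)
  have gC: "gentle_string_algebra Q0 Q1 h t C"
    unfolding gentle_string_algebra_def
  proof (intro conjI)
    show "string_algebra Q0 Q1 h t C" by (rule strC)
    show "\<forall>b\<in>Q1. (\<forall>a1\<in>Q1. \<forall>a2\<in>Q1. t a1 = h b \<and> in_ideal C [b, a1] \<and> t a2 = h b \<and> in_ideal C [b, a2] \<longrightarrow> a1 = a2) \<and>
        (\<forall>c1\<in>Q1. \<forall>c2\<in>Q1. h c1 = t b \<and> in_ideal C [c1, b] \<and> h c2 = t b \<and> in_ideal C [c2, b] \<longrightarrow> c1 = c2)"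
      unfolding SC using S2 S3 by blast
    show "\<exists>R'. (\<forall>r\<in>R'. valid_path Q1 h t r \<and> length r = 2) \<and>
           (\<forall>p. valid_path Q1 h t p \<longrightarrow> (in_ideal C p \<longleftrightarrow> in_ideal R' p))"
      using pathsC by (intro exI[of _ C]) (auto simp: paths_of_def C_def color_rels_def)
  qed
  have fin: "\<forall>p. valid_path Q1 h t p \<longrightarrow> in_ideal C p \<longrightarrow> in_ideal R p"
  proof (intro allI impI)
    fix p assume "in_ideal C p"
    then obtain r where r: "r \<in> C" "sublist r p" unfolding in_ideal_def by blast
    then obtain x y where xy: "r = [x,y]" unfolding C_def color_rels_def by blast
    have "in_ideal C [x,y]" using r xy unfolding in_ideal_def by blast
    then have "in_ideal R [x,y]" using SC S1 by blast
    then obtain r' where "r' \<in> R" "sublist r' [x,y]" unfolding in_ideal_def by blast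
    then show "in_ideal R p" using r xy unfolding in_ideal_def by (meson sublist_order.order_trans)
  qed
  show ?thesis using col gC fin unfolding C_def by blast
qed

end

definition loc :: "'a set \<Rightarrow> ('a \<Rightarrow> 'v) \<Rightarrow> ('a \<Rightarrow> 'v) \<Rightarrow> 'a list set \<Rightarrow> 'v \<Rightarrow> ('a \<Rightarrow> 'a \<Rightarrow> bool) \<Rightarrow> bool" where
  "loc Q1 h t R v M \<longleftrightarrow> (\<forall>a b. M a b \<longrightarrow> a\<in>Q1 \<and> b\<in>Q1 \<and> h a = v \<and> t b = v \<and> in_ideal R [a,b]) \<and>
     (\<forall>a b b'. M a b \<longrightarrow> M a b' \<longrightarrow> b = b') \<and> (\<forall>a a' b. M a b \<longrightarrow> M a' b \<longrightarrow> a = a') \<and>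
     (\<forall>a b1 b2. a\<in>Q1 \<longrightarrow> b1\<in>Q1 \<longrightarrow> b2\<in>Q1 \<longrightarrow> b1\<noteq>b2 \<longrightarrow> h a = v \<longrightarrow> t b1 = v \<longrightarrow> t b2 = v \<longrightarrow> (\<exists>b. M a b)) \<and>
     (\<forall>b a1 a2. b\<in>Q1 \<longrightarrow> a1\<in>Q1 \<longrightarrow> a2\<in>Q1 \<longrightarrow> a1\<noteq>a2 \<longrightarrow> t b = v \<longrightarrow> h a1 = v \<longrightarrow> h a2 = v \<longrightarrow> (\<exists>a. M a b))"

context
  fixes Q0 :: "'v set" and Q1 :: "'a set" and h t :: "'a \<Rightarrow> 'v" and R :: "'a list set"
  assumes SA: "string_algebra Q0 Q1 h t R"
begin

lemma sNI: "b\<in>Q1 \<Longrightarrow> a1\<in>Q1 \<Longrightarrow> a2\<in>Q1 \<Longrightarrow> t a1 = h b \<Longrightarrow> t a2 = h b \<Longrightarrow>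
   \<not> in_ideal R [b,a1] \<Longrightarrow> \<not> in_ideal R [b,a2] \<Longrightarrow> a1 = a2"
  using SA unfolding string_algebra_def by blast

lemma pNI: "b\<in>Q1 \<Longrightarrow> a1\<in>Q1 \<Longrightarrow> a2\<in>Q1 \<Longrightarrow> h a1 = t b \<Longrightarrow> h a2 = t b \<Longrightarrow>
   \<not> in_ideal R [a1,b] \<Longrightarrow> \<not> in_ideal R [a2,b] \<Longrightarrow> a1 = a2"
  using SA unfolding string_algebra_def by blast

lemma in2: "x\<in>Q1 \<Longrightarrow> y\<in>Q1 \<Longrightarrow> z\<in>Q1 \<Longrightarrow> h x = v \<Longrightarrow> h y = v \<Longrightarrow> h z = v \<Longrightarrow> x \<noteq> y \<Longrightarrow> z = x \<or> z = y"
proof -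
  assume A: "x\<in>Q1" "y\<in>Q1" "z\<in>Q1" "h x = v" "h y = v" "h z = v" "x \<noteq> y"
  have qv: "quiver Q0 Q1 h t" using SA by (simp add: string_algebra_def)
  have deg: "\<forall>v\<in>Q0. card {a\<in>Q1. h a = v} \<le> 2 \<and> card {a\<in>Q1. t a = v} \<le> 2"
    using SA by (simp add: string_algebra_def)
  have "v \<in> Q0" using qv A unfolding quiver_def by blast
  then have "card {a\<in>Q1. h a = v} \<le> 2" using deg by blast
  moreover have "finite {a\<in>Q1. h a = v}" using qv unfolding quiver_def by simp
  ultimately show ?thesis using three[of "{a\<in>Q1. h a = v}" x y z] A by simp
qed

lemma out2: "x\<in>Q1 \<Longrightarrow> y\<in>Q1 \<Longrightarrow> z\<in>Q1 \<Longrightarrow> t x = v \<Longrightarrow> t y = v \<Longrightarrow> t z = v \<Longrightarrow> x \<noteq> y \<Longrightarrow> z = x \<or> z = y"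
proof -
  assume A: "x\<in>Q1" "y\<in>Q1" "z\<in>Q1" "t x = v" "t y = v" "t z = v" "x \<noteq> y"
  have qv: "quiver Q0 Q1 h t" using SA by (simp add: string_algebra_def)
  have deg: "\<forall>v\<in>Q0. card {a\<in>Q1. h a = v} \<le> 2 \<and> card {a\<in>Q1. t a = v} \<le> 2"
    using SA by (simp add: string_algebra_def)
  have "v \<in> Q0" using qv A unfolding quiver_def by blast
  then have "card {a\<in>Q1. t a = v} \<le> 2" using deg by blast
  moreover have "finite {a\<in>Q1. t a = v}" using qv unfolding quiver_def by simp
  ultimately show ?thesis using three[of "{a\<in>Q1. t a = v}" x y z] A by simp
qed

lemma local_ex: "\<exists>M. loc Q1 h t R v M"
proof -
  let ?I2 = "\<exists>a1 a2. a1\<in>Q1 \<and> a2\<in>Q1 \<and> a1\<noteq>a2 \<and> h a1 = v \<and> h a2 = v"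
  let ?O2 = "\<exists>b1 b2. b1\<in>Q1 \<and> b2\<in>Q1 \<and> b1\<noteq>b2 \<and> t b1 = v \<and> t b2 = v"
  consider "?I2" "?O2" | "?I2" "\<not> ?O2" | "\<not> ?I2" "?O2" | "\<not> ?I2" "\<not> ?O2" by blast
  then show ?thesis
  proof cases
    case 1
    then obtain a1 a2 b1 b2 where ab: "a1\<in>Q1" "a2\<in>Q1" "a1\<noteq>a2" "h a1 = v" "h a2 = v"
      "b1\<in>Q1" "b2\<in>Q1" "b1\<noteq>b2" "t b1 = v" "t b2 = v" by blast
    have allIn: "a \<in> Q1 \<Longrightarrow> h a = v \<Longrightarrow> a = a1 \<or> a = a2" for a using in2 ab by blast
    have allOut: "b \<in> Q1 \<Longrightarrow> t b = v \<Longrightarrow> b = b1 \<or> b = b2" for b using out2 ab by blast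
    show ?thesis
    proof (cases "in_ideal R [a1,b1] \<and> in_ideal R [a2,b2]")
      case True
      show ?thesis
        apply (rule exI[of _ "\<lambda>x y. (x = a1 \<and> y = b1) \<or> (x = a2 \<and> y = b2)"])
        unfolding loc_def using True ab allIn allOut by blast
    next
      case False
      have I: "in_ideal R [a1,b2] \<and> in_ideal R [a2,b1]"
      proof (cases "in_ideal R [a1,b1]")
        case True
        then have n: "\<not> in_ideal R [a2,b2]" using False by blast
        have "in_ideal R [a2,b1]" using sNI[of a2 b1 b2] n ab by auto
        moreover have "in_ideal R [a1,b2]" using pNI[of b2 a1 a2] n ab by auto
        ultimately show ?thesis by blast
      next
        case False
        have "in_ideal R [a1,b2]" using sNI[of a1 b1 b2] False ab by auto
        moreover have "in_ideal R [a2,b1]" using pNI[of b1 a1 a2] False ab by auto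
        ultimately show ?thesis by blast
      qed
      show ?thesis
        apply (rule exI[of _ "\<lambda>x y. (x = a1 \<and> y = b2) \<or> (x = a2 \<and> y = b1)"])
        unfolding loc_def using I ab allIn allOut by blast
    qed
  next
    case 2
    then obtain a1 a2 where ab: "a1\<in>Q1" "a2\<in>Q1" "a1\<noteq>a2" "h a1 = v" "h a2 = v" by blast
    show ?thesis
    proof (cases "\<exists>b\<in>Q1. t b = v")
      case True
      then obtain b where b: "b \<in> Q1" "t b = v" by blast
      have allOut: "b' \<in> Q1 \<Longrightarrow> t b' = v \<Longrightarrow> b' = b" for b' using 2(2) b by blast
      have "in_ideal R [a1,b] \<or> in_ideal R [a2,b]" using pNI[of b a1 a2] ab b by auto
      then obtain a where a: "a \<in> Q1" "h a = v" "in_ideal R [a,b]" using ab by blast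
      show ?thesis
        apply (rule exI[of _ "\<lambda>x y. x = a \<and> y = b"])
        unfolding loc_def using a b allOut by blast
    next
      case False
      show ?thesis
        apply (rule exI[of _ "\<lambda>x y. False"])
        unfolding loc_def using False by blast
    qed
  next
    case 3
    then obtain b1 b2 where ab: "b1\<in>Q1" "b2\<in>Q1" "b1\<noteq>b2" "t b1 = v" "t b2 = v" by blast
    show ?thesis
    proof (cases "\<exists>a\<in>Q1. h a = v")
      case True
      then obtain a where a: "a \<in> Q1" "h a = v" by blast
      have allIn: "a' \<in> Q1 \<Longrightarrow> h a' = v \<Longrightarrow> a' = a" for a' using 3(1) a by blast
      have "in_ideal R [a,b1] \<or> in_ideal R [a,b2]" using sNI[of a b1 b2] ab a by auto
      then obtain b where b: "b \<in> Q1" "t b = v" "in_ideal R [a,b]" using ab by blast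
      show ?thesis
        apply (rule exI[of _ "\<lambda>x y. x = a \<and> y = b"])
        unfolding loc_def using a b allIn by blast
    next
      case False
      show ?thesis
        apply (rule exI[of _ "\<lambda>x y. False"])
        unfolding loc_def using False by blast
    qed
  next
    case 4
    show ?thesis
      apply (rule exI[of _ "\<lambda>x y. False"])
      unfolding loc_def using 4 by blast
  qed
qed

lemma S_ex: "\<exists>S. (\<forall>a b. S a b \<longrightarrow> a \<in> Q1 \<and> b \<in> Q1 \<and> h a = t b \<and> in_ideal R [a,b]) \<and>
    (\<forall>a b b'. S a b \<longrightarrow> S a b' \<longrightarrow> b = b') \<and>
    (\<forall>a a' b. S a b \<longrightarrow> S a' b \<longrightarrow> a = a') \<and>
    (\<forall>a b1 b2. a\<in>Q1 \<longrightarrow> b1\<in>Q1 \<longrightarrow> b2\<in>Q1 \<longrightarrow> b1\<noteq>b2 \<longrightarrow> t b1 = h a \<longrightarrow> t b2 = h a \<longrightarrow> (\<exists>b. S a b)) \<and>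
    (\<forall>b a1 a2. b\<in>Q1 \<longrightarrow> a1\<in>Q1 \<longrightarrow> a2\<in>Q1 \<longrightarrow> a1\<noteq>a2 \<longrightarrow> h a1 = t b \<longrightarrow> h a2 = t b \<longrightarrow> (\<exists>a. S a b))"
proof -
  obtain Mf where Mf: "\<And>v. loc Q1 h t R v (Mf v)" using local_ex by metis
  define S where "S = (\<lambda>a b. Mf (h a) a b)"
  have L: "\<And>v a b. Mf v a b \<Longrightarrow> a\<in>Q1 \<and> b\<in>Q1 \<and> h a = v \<and> t b = v \<and> in_ideal R [a,b]"
    using Mf unfolding loc_def by blast
  have F1: "\<And>v a b b'. Mf v a b \<Longrightarrow> Mf v a b' \<Longrightarrow> b = b'" using Mf unfolding loc_def by blast
  have F2: "\<And>v a a' b. Mf v a b \<Longrightarrow> Mf v a' b \<Longrightarrow> a = a'" using Mf unfolding loc_def by blast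
  have T1: "\<And>v a b1 b2. a\<in>Q1 \<Longrightarrow> b1\<in>Q1 \<Longrightarrow> b2\<in>Q1 \<Longrightarrow> b1\<noteq>b2 \<Longrightarrow> h a = v \<Longrightarrow> t b1 = v \<Longrightarrow> t b2 = v \<Longrightarrow> \<exists>b. Mf v a b"
    using Mf unfolding loc_def by blast
  have T2: "\<And>v b a1 a2. b\<in>Q1 \<Longrightarrow> a1\<in>Q1 \<Longrightarrow> a2\<in>Q1 \<Longrightarrow> a1\<noteq>a2 \<Longrightarrow> t b = v \<Longrightarrow> h a1 = v \<Longrightarrow> h a2 = v \<Longrightarrow> \<exists>a. Mf v a b"
    using Mf unfolding loc_def by blast
  have P1: "\<forall>a b. S a b \<longrightarrow> a \<in> Q1 \<and> b \<in> Q1 \<and> h a = t b \<and> in_ideal R [a,b]"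
    unfolding S_def using L by metis
  have P2: "\<forall>a b b'. S a b \<longrightarrow> S a b' \<longrightarrow> b = b'" unfolding S_def using F1 by blast
  have P3: "\<forall>a a' b. S a b \<longrightarrow> S a' b \<longrightarrow> a = a'"
  proof (intro allI impI)
    fix a a' b assume A: "S a b" "S a' b"
    then have "h a = t b" "h a' = t b" unfolding S_def using L by metis+
    then show "a = a'" using A unfolding S_def using F2 by metis
  qed
  have P4: "\<forall>a b1 b2. a\<in>Q1 \<longrightarrow> b1\<in>Q1 \<longrightarrow> b2\<in>Q1 \<longrightarrow> b1\<noteq>b2 \<longrightarrow> t b1 = h a \<longrightarrow> t b2 = h a \<longrightarrow> (\<exists>b. S a b)"
    unfolding S_def using T1 by blast
  have P5: "\<forall>b a1 a2. b\<in>Q1 \<longrightarrow> a1\<in>Q1 \<longrightarrow> a2\<in>Q1 \<longrightarrow> a1\<noteq>a2 \<longrightarrow> h a1 = t b \<longrightarrow> h a2 = t b \<longrightarrow> (\<exists>a. S a b)"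
  proof (intro allI impI)
    fix b a1 a2 assume A: "b\<in>Q1" "a1\<in>Q1" "a2\<in>Q1" "a1\<noteq>a2" "h a1 = t b" "h a2 = t b"
    then obtain a where a: "Mf (t b) a b" using T2[of b a1 a2 "t b"] by blast
    then have "h a = t b" using L by blast
    then show "\<exists>a. S a b" unfolding S_def using a by metis
  qed
  show ?thesis using P1 P2 P3 P4 P5 by blast
qed

end

theorem mainTheorem3:
  fixes Q0 :: "'v set" and Q1 :: "'a set" and h t :: "'a \<Rightarrow> 'v" and R :: "'a list set"
  assumes "string_algebra Q0 Q1 h t R"
    and "no_oriented_cycles Q1 h t"
  shows "\<exists>c :: 'a \<Rightarrow> nat.
           coloring Q1 h t c \<and>
           gentle_string_algebra Q0 Q1 h t (color_rels Q1 h t c) \<and>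
           (\<forall>p. valid_path Q1 h t p \<longrightarrow> in_ideal (color_rels Q1 h t c) p \<longrightarrow> in_ideal R p)"
proof -
  obtain S where S: "\<forall>a b. S a b \<longrightarrow> a \<in> Q1 \<and> b \<in> Q1 \<and> h a = t b \<and> in_ideal R [a,b]"
    "\<forall>a b b'. S a b \<longrightarrow> S a b' \<longrightarrow> b = b'"
    "\<forall>a a' b. S a b \<longrightarrow> S a' b \<longrightarrow> a = a'"
    "\<forall>a b1 b2. a\<in>Q1 \<longrightarrow> b1\<in>Q1 \<longrightarrow> b2\<in>Q1 \<longrightarrow> b1\<noteq>b2 \<longrightarrow> t b1 = h a \<longrightarrow> t b2 = h a \<longrightarrow> (\<exists>b. S a b)"
    "\<forall>b a1 a2. b\<in>Q1 \<longrightarrow> a1\<in>Q1 \<longrightarrow> a2\<in>Q1 \<longrightarrow> a1\<noteq>a2 \<longrightarrow> h a1 = t b \<longrightarrow> h a2 = t b \<longrightarrow> (\<exists>a. S a b)"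
    using S_ex[OF assms(1)] by blast
  show ?thesis
    by (rule result[OF assms(1) assms(2), of S]) (use S in blast)+
qed

end
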